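(* Let $(X,d)$ be a separable metric space and $f:X\to X$ a Borel measurable map. If either $f$ has only countably many distinct stable classes, or $f$ is Lyapunov stable on its recurrent set $R(f)$, then $f$ has no $f$-invariant Borel probability measure that is an expansive measure of $f$.
   Context: The stable class of $p\in X$ is $W^s(p)=\{x\in X:\lim_{n\to\infty}d(f^n(x),f^n(p))=0\}$. The recurrent set is $R(f)=\{x\in X: x\in\omega_f(x)\}$, where $\omega_f(x)$ is the set of limits $\lim_{k\to\infty}f^{n_k}(x)$ over sequences $n_k\to\infty$. $f$ is Lyapunov stable on $A\subset X$ if for every $x\in A$ and $\epsilon>0$ there is a neighborhood $U(x)$ of $x$ with $d(f^n(x),f^n(y))<\epsilon$ for all $n\ge0$ and $y\in U(x)\cap A$. A Borel probability measure $\mu$ is an expansive measure of $f$ if there is $\delta>0$ with $\mu(\Phi_\delta(x))=0$ for all $x\in X$, where $\Phi_\delta(x)=\{y\in X: d(f^i(y),f^i(x))\le\delta \ \forall i\in\{0,1,2,\dots\}\}$; it is invariant if $\mu=\mu\circ f^{-1}$. *)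

theory Defs
  imports "HOL-Analysis.Analysis" "HOL-Probability.Probability"
begin

definition stable_class :: "('a::metric_space \<Rightarrow> 'a) \<Rightarrow> 'a \<Rightarrow> 'a set" where
  "stable_class f p = {x. (\<lambda>n. dist ((f ^^ n) x) ((f ^^ n) p)) \<longlonglongrightarrow> 0}"

definition omega_limit :: "('a::metric_space \<Rightarrow> 'a) \<Rightarrow> 'a \<Rightarrow> 'a set" where
  "omega_limit f x = {y. \<exists>n::nat \<Rightarrow> nat. filterlim n at_top sequentially \<and>
                          (\<lambda>k. (f ^^ n k) x) \<longlonglongrightarrow> y}"

definition recurrent_set :: "('a::metric_space \<Rightarrow> 'a) \<Rightarrow> 'a set" where
  "recurrent_set f = {x. x \<in> omega_limit f x}"

definition lyapunov_stable_on :: "('a::metric_space \<Rightarrow> 'a) \<Rightarrow> 'a set \<Rightarrow> bool" where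
  "lyapunov_stable_on f A \<longleftrightarrow>
     (\<forall>x\<in>A. \<forall>\<epsilon>>0. \<exists>U. open U \<and> x \<in> U \<and>
        (\<forall>y\<in>U \<inter> A. \<forall>n. dist ((f ^^ n) x) ((f ^^ n) y) < \<epsilon>))"

definition dyn_ball :: "('a::metric_space \<Rightarrow> 'a) \<Rightarrow> real \<Rightarrow> 'a \<Rightarrow> 'a set" where
  "dyn_ball f \<delta> x = {y. \<forall>i::nat. dist ((f ^^ i) y) ((f ^^ i) x) \<le> \<delta>}"

definition expansive_measure :: "('a::metric_space \<Rightarrow> 'a) \<Rightarrow> 'a measure \<Rightarrow> bool" where
  "expansive_measure f \<mu> \<longleftrightarrow> (\<exists>\<delta>>0. \<forall>x. emeasure \<mu> (dyn_ball f \<delta> x) = 0)"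

definition invariant_measure :: "('a::metric_space \<Rightarrow> 'a) \<Rightarrow> 'a measure \<Rightarrow> bool" where
  "invariant_measure f \<mu> \<longleftrightarrow> distr \<mu> \<mu> f = \<mu>"

end

theory Submission
  imports Defs
begin

lemma funpow_meas:
  fixes f :: "'a::topological_space \<Rightarrow> 'a"
  assumes "f \<in> borel_measurable borel"
  shows "(f ^^ n) \<in> borel_measurable borel"
proof (induction n)
  case 0 have "f ^^ 0 = (\<lambda>x. x)" by auto then show ?case by simp
next
  case (Suc n)
  have "(f ^^ Suc n) = f \<circ> (f ^^ n)" by simp
  then show ?case using Suc assms by (simp add: measurable_comp)
qed

lemma funpow_inv:
  assumes sM: "sets M = sets borel" and inv: "distr M M f = M"
    and meas: "f \<in> borel_measurable borel"
    and A: "A \<in> sets borel"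
  shows "emeasure M ((f ^^ n) -` A) = emeasure M A"
  using A
proof (induction n arbitrary: A)
  case 0 then show ?case by simp
next
  case (Suc n)
  have sp: "space M = UNIV" using sets_eq_imp_space_eq[OF sM] by simp
  have fM: "f \<in> measurable M M" using meas measurable_cong_sets[OF sM sM] by simp
  have B: "(f ^^ n) -` A \<in> sets borel"
    using funpow_meas[OF meas, of n] Suc.prems by (simp add: measurable_sets_borel)
  have "(f ^^ Suc n) -` A = f -` ((f ^^ n) -` A)"
    by (auto simp del: funpow.simps simp add: funpow_Suc_right)
  also have "emeasure M \<dots> = emeasure (distr M M f) ((f ^^ n) -` A)"
    using emeasure_distr[OF fM, of "(f ^^ n) -` A"] B sM sp by simp
  also have "\<dots> = emeasure M A" using inv Suc.IH[OF Suc.prems] by simp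
  finally show ?case .
qed

lemma dyn_ball_meas:
  assumes meas: "f \<in> borel_measurable borel"
  shows "dyn_ball f \<delta> x \<in> sets borel"
proof -
  have "dyn_ball f \<delta> x = (\<Inter>i. (f ^^ i) -` cball ((f ^^ i) x) \<delta>)"
    unfolding dyn_ball_def by (auto simp: dist_commute)
  moreover have "\<And>i. (f ^^ i) -` cball ((f ^^ i) x) \<delta> \<in> sets borel"
    using measurable_sets_borel[OF funpow_meas[OF meas] borel_closed[OF closed_cball]] by simp
  ultimately show ?thesis by auto
qed

lemma poincare:
  fixes f :: "'a::metric_space \<Rightarrow> 'a"
  assumes M: "prob_space M" and sM: "sets M = sets borel" and inv: "distr M M f = M"
    and meas: "f \<in> borel_measurable borel"
    and A: "A \<in> sets borel"
  shows "{x\<in>A. \<forall>n>N. (f ^^ n) x \<notin> A} \<in> null_sets M"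
proof -
  interpret prob_space M by fact
  define S where "S = {x\<in>A. \<forall>n>N. (f ^^ n) x \<notin> A}"
  have Seq: "S = A \<inter> (\<Inter>n\<in>{N<..}. (f ^^ n) -` (- A))" unfolding S_def by auto
  have pre: "\<And>n B. B \<in> sets borel \<Longrightarrow> (f ^^ n) -` B \<in> sets borel"
    using measurable_sets_borel[OF funpow_meas[OF meas]] by simp
  have Sb: "S \<in> sets borel" unfolding Seq using A pre by auto
  define s where "s = Suc N"
  define E where "E k = (f ^^ (k * s)) -` S" for k
  have Eb: "E k \<in> sets M" for k using pre[OF Sb] sM unfolding E_def by simp
  have Em: "measure M (E k) = measure M S" for k
    unfolding E_def measure_def using funpow_inv[OF sM inv meas Sb] by simp
  have disj: "disjoint_family E"
  unfolding disjoint_family_on_def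
  proof (intro ballI impI)
    fix i j :: nat assume "i \<noteq> j"
    show "E i \<inter> E j = {}"
    proof (rule ccontr)
      assume "E i \<inter> E j \<noteq> {}"
      then obtain x where x: "x \<in> E i" "x \<in> E j" by blast
      { fix i j :: nat assume ij: "i < j" and xi: "x \<in> E i" and xj: "x \<in> E j"
        define y where "y = (f ^^ (i * s)) x"
        have yS: "y \<in> S" using xi unfolding E_def y_def by simp
        have "j * s = (j - i) * s + i * s" using ij by (simp add: diff_mult_distrib)
        then have "(f ^^ (j * s)) x = (f ^^ ((j - i) * s)) y"
          unfolding y_def by (simp add: funpow_add)
        then have "(f ^^ ((j - i) * s)) y \<in> A" using xj unfolding E_def S_def by auto
        moreover have "(j - i) * s > N" using ij unfolding s_def
          by (metis Suc_le_eq diff_is_0_eq' le_add1 mult_Suc mult_le_mono1 not_less0 not_less_eq_eq order_le_less_trans le_neq_implies_less zero_less_diff)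
        ultimately have False using yS unfolding S_def by auto }
      then show False using x \<open>i \<noteq> j\<close> by (metis linorder_neqE_nat)
    qed
  qed
  have bound: "real K * measure M S \<le> 1" for K
  proof -
    have "measure M (\<Union>k\<in>{..<K}. E k) = (\<Sum>k\<in>{..<K}. measure M (E k))"
      by (rule measure_finite_Union) (use Eb disj in \<open>auto simp: disjoint_family_on_def\<close>)
    also have "\<dots> = real K * measure M S" using Em by simp
    finally show ?thesis using prob_le_1 by metis
  qed
  have "measure M S = 0"
  proof (rule ccontr)
    assume "measure M S \<noteq> 0"
    then have pos: "measure M S > 0" using measure_nonneg by (metis less_eq_real_def)
    obtain K :: nat where "1 / measure M S < real K" using reals_Archimedean2 by blast
    then have "1 < real K * measure M S" using pos by (simp add: field_simps)
    then show False using bound[of K] by simp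
  qed
  then have "emeasure M S = 0" by (simp add: emeasure_eq_measure)
  then show ?thesis using Sb sM unfolding S_def[symmetric] by (simp add: null_sets_def)
qed

lemma rec_crit:
  fixes f :: "'a::metric_space \<Rightarrow> 'a"
  assumes H: "\<And>e N. e > 0 \<Longrightarrow> \<exists>n>N. dist ((f ^^ n) x) x < e"
  shows "x \<in> recurrent_set f"
proof -
  define n where "n k = (SOME n. n > k \<and> dist ((f ^^ n) x) x < 1 / real (Suc k))" for k
  have n: "n k > k \<and> dist ((f ^^ n k) x) x < 1 / real (Suc k)" for k
    unfolding n_def by (rule someI_ex) (rule H, simp)
  have "filterlim n at_top sequentially"
    unfolding filterlim_at_top eventually_sequentially
    using n by (meson less_imp_le order_trans)
  moreover have "(\<lambda>k. (f ^^ n k) x) \<longlonglongrightarrow> x"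
    unfolding lim_sequentially
  proof (intro allI impI)
    fix r :: real assume "r > 0"
    then obtain K where K: "1 / real (Suc K) < r" using nat_approx_posE by blast
    show "\<exists>no. \<forall>k\<ge>no. dist ((f ^^ n k) x) x < r"
    proof (intro exI allI impI)
      fix k assume "K \<le> k"
      then have "1 / real (Suc k) \<le> 1 / real (Suc K)" by (simp add: frac_le)
      then show "dist ((f ^^ n k) x) x < r" using n[of k] K by linarith
    qed
  qed
  ultimately show ?thesis unfolding recurrent_set_def omega_limit_def by blast
qed

lemma approx_ball:
  fixes x :: "'a::metric_space"
  assumes D: "closure D = UNIV" and e: "e > 0"
  shows "\<exists>d\<in>D. \<exists>m. x \<in> ball d (1 / real (Suc m)) \<and> ball d (1 / real (Suc m)) \<subseteq> ball x e"
proof -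
  obtain m where m: "1 / real (Suc m) < e / 2" using nat_approx_posE[of "e/2"] e by auto
  have "x \<in> closure D" using D by simp
  then obtain d where d: "d \<in> D" "dist d x < 1 / real (Suc m)"
    unfolding closure_approachable by (metis of_nat_0_less_iff zero_less_Suc divide_pos_pos zero_less_one)
  have "ball d (1 / real (Suc m)) \<subseteq> ball x e"
  proof
    fix z assume "z \<in> ball d (1 / real (Suc m))"
    then have "dist d z < 1 / real (Suc m)" by simp
    moreover have "dist x z \<le> dist d x + dist d z" by (metis dist_commute dist_triangle)
    ultimately show "z \<in> ball x e" using d m by simp
  qed
  moreover have "x \<in> ball d (1 / real (Suc m))" using d by simp
  ultimately show ?thesis using d by blast
qed

lemma ae_recurrent:
  fixes f :: "'a::metric_space \<Rightarrow> 'a" and D :: "'a set"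
  assumes M: "prob_space M" and sM: "sets M = sets borel" and inv: "distr M M f = M"
    and meas: "f \<in> borel_measurable borel"
    and Dc: "countable D" and D: "closure D = UNIV"
  shows "\<exists>Z\<in>null_sets M. - recurrent_set f \<subseteq> Z"
proof -
  define B where "B p = ball (fst p) (1 / real (Suc (fst (snd p))))" for p :: "'a \<times> nat \<times> nat"
  define Z where "Z = (\<Union>p\<in>D \<times> UNIV \<times> UNIV. {x\<in>B p. \<forall>n>snd (snd p). (f ^^ n) x \<notin> B p})"
  have "Z \<in> null_sets M" unfolding Z_def
  proof (rule null_sets_UN')
    show "countable (D \<times> (UNIV :: nat set) \<times> (UNIV :: nat set))" using Dc by simp
    fix p assume "p \<in> D \<times> (UNIV :: nat set) \<times> (UNIV :: nat set)"
    show "{x\<in>B p. \<forall>n>snd (snd p). (f ^^ n) x \<notin> B p} \<in> null_sets M"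
      by (rule poincare[OF M sM inv meas]) (simp add: B_def)
  qed
  moreover have "- recurrent_set f \<subseteq> Z"
  proof
    fix x assume x: "x \<in> - recurrent_set f"
    show "x \<in> Z"
    proof (rule ccontr)
      assume nZ: "x \<notin> Z"
      have "x \<in> recurrent_set f"
      proof (rule rec_crit)
        fix e :: real and N :: nat assume "e > 0"
        then obtain d m where dm: "d \<in> D" "x \<in> ball d (1 / real (Suc m))"
          "ball d (1 / real (Suc m)) \<subseteq> ball x e"
          using approx_ball[OF D] by blast
        have "x \<notin> {x\<in>B (d, m, N). \<forall>n>N. (f ^^ n) x \<notin> B (d, m, N)}"
          using nZ dm(1) unfolding Z_def by auto
        then obtain n where "n > N" "(f ^^ n) x \<in> B (d, m, N)" using dm(2) unfolding B_def by auto
        then have "n > N" "(f ^^ n) x \<in> ball x e" using dm(3) unfolding B_def by auto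
        then show "\<exists>n>N. dist ((f ^^ n) x) x < e" by (auto simp: dist_commute)
      qed
      then show False using x by simp
    qed
  qed
  ultimately show ?thesis by blast
qed

theorem corollary3p5:
  fixes f :: "'a::metric_space \<Rightarrow> 'a"
  assumes sep: "separable_space (euclidean :: 'a topology)"
    and meas: "f \<in> borel_measurable borel"
    and hyp: "countable (range (stable_class f)) \<or> lyapunov_stable_on f (recurrent_set f)"
  shows "\<not> (\<exists>\<mu>. prob_space \<mu> \<and> sets \<mu> = sets borel \<and>
                invariant_measure f \<mu> \<and> expansive_measure f \<mu>)"
proof
  assume "\<exists>\<mu>. prob_space \<mu> \<and> sets \<mu> = sets borel \<and>
                invariant_measure f \<mu> \<and> expansive_measure f \<mu>"
  then obtain M where M: "prob_space M" and sM: "sets M = sets borel"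
    and inv: "distr M M f = M" and exp: "expansive_measure f M"
    unfolding invariant_measure_def by blast
  interpret prob_space M by fact
  have sp: "space M = UNIV" using sets_eq_imp_space_eq[OF sM] by simp
  obtain \<delta> where \<delta>: "\<delta> > 0" "\<And>x. emeasure M (dyn_ball f \<delta> x) = 0"
    using exp unfolding expansive_measure_def by blast
  have nb: "dyn_ball f \<delta> x \<in> null_sets M" for x
    using \<delta>(2)[of x] dyn_ball_meas[OF meas] sM by (simp add: null_sets_def)
  have nullpre: "(f ^^ N) -` dyn_ball f \<delta> x \<in> null_sets M" for N x
  proof -
    have "(f ^^ N) -` dyn_ball f \<delta> x \<in> sets borel"
      using measurable_sets_borel[OF funpow_meas[OF meas] dyn_ball_meas[OF meas]] by simp
    moreover have "emeasure M ((f ^^ N) -` dyn_ball f \<delta> x) = 0"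
      using funpow_inv[OF sM inv meas dyn_ball_meas[OF meas]] \<delta>(2) by simp
    ultimately show ?thesis using sM by (simp add: null_sets_def)
  qed
  have "\<exists>Z\<in>null_sets M. UNIV \<subseteq> Z"
    using hyp
  proof
    assume cnt: "countable (range (stable_class f))"
    define rep where "rep C = (SOME p. C = stable_class f p)" for C
    define Z where "Z = (\<Union>C\<in>range (stable_class f). \<Union>N. (f ^^ N) -` dyn_ball f \<delta> ((f ^^ N) (rep C)))"
    have "Z \<in> null_sets M" unfolding Z_def
      by (rule null_sets_UN'[OF cnt]) (rule null_sets_UN, rule nullpre)
    moreover have "UNIV \<subseteq> Z"
    proof
      fix y :: 'a
      define C where "C = stable_class f y"
      have "C = stable_class f (rep C)" unfolding rep_def C_def by (rule someI) (rule refl)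
      moreover have "y \<in> C" unfolding C_def stable_class_def by simp
      ultimately have "(\<lambda>n. dist ((f ^^ n) y) ((f ^^ n) (rep C))) \<longlonglongrightarrow> 0"
        unfolding stable_class_def by auto
      then obtain N where N: "\<And>n. n \<ge> N \<Longrightarrow> dist ((f ^^ n) y) ((f ^^ n) (rep C)) < \<delta>"
        unfolding lim_sequentially using \<delta>(1) by fastforce
      have "y \<in> (f ^^ N) -` dyn_ball f \<delta> ((f ^^ N) (rep C))"
        unfolding dyn_ball_def
      proof (simp, intro allI)
        fix i
        have "dist ((f ^^ (i + N)) y) ((f ^^ (i + N)) (rep C)) < \<delta>" using N by simp
        then show "dist ((f ^^ i) ((f ^^ N) y)) ((f ^^ i) ((f ^^ N) (rep C))) \<le> \<delta>"
          by (simp add: funpow_add)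
      qed
      then show "y \<in> Z" unfolding Z_def C_def by blast
    qed
    ultimately show ?thesis by blast
  next
    assume lyap: "lyapunov_stable_on f (recurrent_set f)"
    define R where "R = recurrent_set f"
    obtain D :: "'a set" where Dc: "countable D" and D: "closure D = UNIV"
      using sep unfolding separable_space_def by auto
    obtain Z0 where Z0: "Z0 \<in> null_sets M" "- R \<subseteq> Z0"
      using ae_recurrent[OF M sM inv meas Dc D] unfolding R_def by blast
    have "\<forall>x\<in>R. \<exists>U. open U \<and> x \<in> U \<and> (\<forall>y\<in>U \<inter> R. \<forall>n. dist ((f ^^ n) x) ((f ^^ n) y) < \<delta>)"
      using lyap \<delta>(1) unfolding lyapunov_stable_on_def R_def by blast
    then obtain U where U: "\<And>x. x \<in> R \<Longrightarrow> open (U x) \<and> x \<in> U x \<and>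
        (\<forall>y\<in>U x \<inter> R. \<forall>n. dist ((f ^^ n) x) ((f ^^ n) y) < \<delta>)"
      by metis
    define Bl where "Bl p = ball (fst p) (1 / real (Suc (snd p)))" for p :: "'a \<times> nat"
    define I where "I = {p \<in> D \<times> UNIV. \<exists>x\<in>R. Bl p \<subseteq> U x}"
    define xr where "xr p = (SOME x. x \<in> R \<and> Bl p \<subseteq> U x)" for p
    define Z where "Z = Z0 \<union> (\<Union>p\<in>I. dyn_ball f \<delta> (xr p))"
    have "countable (D \<times> (UNIV :: nat set))" using Dc by simp
    then have "countable I" unfolding I_def
      by (rule countable_subset[rotated]) auto
    then have "Z \<in> null_sets M" unfolding Z_def using Z0(1)
      by (intro null_sets.Un null_sets_UN') (auto intro: nb)
    moreover have "UNIV \<subseteq> Z"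
    proof
      fix y :: 'a
      show "y \<in> Z"
      proof (cases "y \<in> R")
        case False then show ?thesis using Z0 unfolding Z_def by blast
      next
        case True
        obtain e where e: "e > 0" "ball y e \<subseteq> U y" using U[OF True] open_contains_ball by blast
        obtain d m where dm: "d \<in> D" "y \<in> ball d (1 / real (Suc m))"
          "ball d (1 / real (Suc m)) \<subseteq> ball y e"
          using approx_ball[OF D e(1)] by blast
        have BU: "Bl (d, m) \<subseteq> U y" using dm(3) e(2) unfolding Bl_def by auto
        then have I: "(d, m) \<in> I" unfolding I_def using dm(1) True by blast
        have "xr (d, m) \<in> R \<and> Bl (d, m) \<subseteq> U (xr (d, m))"
          unfolding xr_def by (rule someI[of _ y]) (use True BU in blast)
        moreover have "y \<in> Bl (d, m)" using dm(2) unfolding Bl_def by simp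
        ultimately have "\<forall>n. dist ((f ^^ n) (xr (d, m))) ((f ^^ n) y) < \<delta>"
          using U True by blast
        then have "y \<in> dyn_ball f \<delta> (xr (d, m))"
          unfolding dyn_ball_def by (auto simp: dist_commute less_imp_le)
        then show ?thesis using I unfolding Z_def by blast
      qed
    qed
    ultimately show ?thesis by blast
  qed
  then obtain Z where Z: "Z \<in> null_sets M" "UNIV \<subseteq> Z" by blast
  then have "emeasure M (space M) \<le> emeasure M Z"
    using sp by (intro emeasure_mono) auto
  then show False using Z(1) emeasure_space_1 by (simp add: null_sets_def)
qed

end
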